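(* For every $3$-graph $F\in\mathbf{FACTOR}_3^{\cdot,2}$ we have $\pi_{\cdot}(F)=0$.
   Context: A $k$-graph $H$ has edge set $E(H)\subseteq\binom{V(H)}{k}$; $\delta_2(H)$ is the minimum over pairs of vertices of the number of edges containing the pair. An $F$-factor is a set of vertex-disjoint copies of $F$ covering all vertices; $H$ is $F$-free if it contains no copy of $F$. An $(n,p,\mu,\cdot)$ $k$-graph is a $k$-graph $H$ on a vertex set $V$ with $|V|=n$ such that for all $X_1,\dots,X_k\subseteq V$, the number of $k$-tuples $(x_1,\dots,x_k)\in X_1\times\cdots\times X_k$ with $\{x_1,\dots,x_k\}\in E(H)$ is at least $p|X_1|\cdots|X_k|-\mu n^k$. $\mathbf{FACTOR}_3^{\cdot,2}$ is the class of $3$-graphs $F$ such that for all $0<p,\alpha<1$ there exist $n_0$ and $\mu>0$ such that every $(n,p,\mu,\cdot)$ $3$-graph $H$ with $\delta_2(H)\ge\alpha n$, $n\ge n_0$ and $v(F)\mid n$ has an $F$-factor. $\pi_{\cdot}(F)=\sup\{p\in[0,1]:$ for every $\mu>0$ and $n_0$ there is an $F$-free $(n,p,\mu,\cdot)$ $3$-graph with $n\ge n_0\}$. *)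

theory Defs
  imports Complex_Main
begin

definition three_graph :: "'a set \<Rightarrow> 'a set set \<Rightarrow> bool" where
  "three_graph V E \<longleftrightarrow> finite V \<and> E \<subseteq> {e. e \<subseteq> V \<and> card e = 3}"

definition min_codeg_ge :: "'a set \<Rightarrow> 'a set set \<Rightarrow> real \<Rightarrow> bool" where
  "min_codeg_ge V E d \<longleftrightarrow>
     (\<forall>x\<in>V. \<forall>y\<in>V. x \<noteq> y \<longrightarrow> real (card {e\<in>E. x \<in> e \<and> y \<in> e}) \<ge> d)"

definition dense_dot :: "'a set \<Rightarrow> 'a set set \<Rightarrow> real \<Rightarrow> real \<Rightarrow> bool" where
  "dense_dot V E p \<mu> \<longleftrightarrow>
     (\<forall>X1 X2 X3. X1 \<subseteq> V \<longrightarrow> X2 \<subseteq> V \<longrightarrow> X3 \<subseteq> V \<longrightarrow>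
        real (card {(x1, x2, x3). x1 \<in> X1 \<and> x2 \<in> X2 \<and> x3 \<in> X3 \<and> {x1, x2, x3} \<in> E})
          \<ge> p * real (card X1) * real (card X2) * real (card X3) - \<mu> * real (card V) ^ 3)"

definition embeds :: "('b \<Rightarrow> 'a) \<Rightarrow> 'b set \<Rightarrow> 'b set set \<Rightarrow> 'a set \<Rightarrow> 'a set set \<Rightarrow> bool" where
  "embeds \<phi> VF EF V E \<longleftrightarrow> inj_on \<phi> VF \<and> \<phi> ` VF \<subseteq> V \<and> (\<forall>e\<in>EF. \<phi> ` e \<in> E)"

definition F_free :: "'b set \<Rightarrow> 'b set set \<Rightarrow> 'a set \<Rightarrow> 'a set set \<Rightarrow> bool" where
  "F_free VF EF V E \<longleftrightarrow> \<not> (\<exists>\<phi>. embeds \<phi> VF EF V E)"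

definition has_F_factor :: "'b set \<Rightarrow> 'b set set \<Rightarrow> 'a set \<Rightarrow> 'a set set \<Rightarrow> bool" where
  "has_F_factor VF EF V E \<longleftrightarrow>
     (\<exists>P. \<Union>P = V \<and> (\<forall>S\<in>P. \<forall>T\<in>P. S \<noteq> T \<longrightarrow> S \<inter> T = {}) \<and>
          (\<forall>S\<in>P. \<exists>\<phi>. embeds \<phi> VF EF V E \<and> \<phi> ` VF = S))"

definition FACTOR_dot_2 :: "'b set \<Rightarrow> 'b set set \<Rightarrow> bool" where
  "FACTOR_dot_2 VF EF \<longleftrightarrow>
     (\<forall>p \<alpha>::real. 0 < p \<and> p < 1 \<and> 0 < \<alpha> \<and> \<alpha> < 1 \<longrightarrow>
        (\<exists>n0::nat. \<exists>\<mu>::real. \<mu> > 0 \<and>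
           (\<forall>n::nat. \<forall>E::nat set set.
              three_graph {0..<n} E \<longrightarrow> dense_dot {0..<n} E p \<mu> \<longrightarrow>
              min_codeg_ge {0..<n} E (\<alpha> * real n) \<longrightarrow> n \<ge> n0 \<longrightarrow>
              card VF dvd n \<longrightarrow> has_F_factor VF EF {0..<n} E)))"

definition pi_dot_set :: "'b set \<Rightarrow> 'b set set \<Rightarrow> real set" where
  "pi_dot_set VF EF = {p. 0 \<le> p \<and> p \<le> 1 \<and>
     (\<forall>\<mu>::real. \<mu> > 0 \<longrightarrow> (\<forall>n0::nat. \<exists>n::nat. \<exists>E::nat set set. n \<ge> n0 \<and>
        three_graph {0..<n} E \<and> dense_dot {0..<n} E p \<mu> \<and> F_free VF EF {0..<n} E))}"

text \<open>pi_dot(F) = sup of that set (with sup of the empty set taken as 0, i.e. sup in [0,1]).\<close>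
definition pi_dot :: "'b set \<Rightarrow> 'b set set \<Rightarrow> real" where
  "pi_dot VF EF = Sup (insert 0 (pi_dot_set VF EF))"

end

theory Submission
  imports Defs
begin


lemma no_factor:
  fixes VF :: "'b set" and EF :: "'b set set"
  assumes fin: "finite VF" and ne: "VF \<noteq> {}" and EFs: "\<forall>e\<in>EF. e \<subseteq> VF"
    and free: "F_free VF EF {0..<m} E0"
    and E0s: "\<forall>e\<in>E0. e \<subseteq> {0..<m}"
    and Edef: "E = E0 \<union> {e. e \<subseteq> {0..<n} \<and> card e = 3 \<and> (\<exists>x\<in>e. m \<le> x)}"
    and small: "card VF * (n - m) < n"
  shows "\<not> has_F_factor VF EF {0..<n} E"
proof
  assume "has_F_factor VF EF {0..<n} E"
  then obtain P where PU: "\<Union>P = {0..<n}" and Pd: "\<forall>S\<in>P. \<forall>T\<in>P. S \<noteq> T \<longrightarrow> S \<inter> T = {}"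
    and Pe: "\<forall>S\<in>P. \<exists>\<phi>. embeds \<phi> VF EF {0..<n} E \<and> \<phi> ` VF = S"
    unfolding has_F_factor_def by blast
  have meet: "S \<inter> {m..<n} \<noteq> {}" if "S \<in> P" for S
  proof
    assume em: "S \<inter> {m..<n} = {}"
    obtain \<phi> where emb: "embeds \<phi> VF EF {0..<n} E" and im: "\<phi> ` VF = S" using Pe \<open>S\<in>P\<close> by blast
    have "S \<subseteq> {0..<n}" using PU \<open>S\<in>P\<close> by blast
    have Ssub: "S \<subseteq> {0..<m}"
    proof
      fix z assume "z \<in> S"
      hence "z < n" "z \<notin> {m..<n}" using em \<open>S \<subseteq> {0..<n}\<close> by auto
      thus "z \<in> {0..<m}" by simp
    qed
    have "embeds \<phi> VF EF {0..<m} E0"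
      unfolding embeds_def
    proof (intro conjI ballI)
      show "inj_on \<phi> VF" using emb by (simp add: embeds_def)
      show "\<phi> ` VF \<subseteq> {0..<m}" using im Ssub by simp
      fix e assume e: "e \<in> EF"
      have "\<phi> ` e \<in> E" using emb e by (simp add: embeds_def)
      moreover have "\<phi> ` e \<subseteq> {0..<m}" using EFs e im Ssub by blast
      moreover have "\<not> (\<exists>x\<in>\<phi> ` e. m \<le> x)"
        using \<open>\<phi> ` e \<subseteq> {0..<m}\<close> by force
      ultimately show "\<phi> ` e \<in> E0" using Edef by blast
    qed
    thus False using free by (auto simp: F_free_def)
  qed
  have finP: "finite P" using PU finite_UnionD by (metis finite_atLeastLessThan)
  have cardS: "card S = card VF" if "S \<in> P" for S
  proof -
    obtain \<phi> where emb: "embeds \<phi> VF EF {0..<n} E" and im: "\<phi> ` VF = S" using Pe \<open>S\<in>P\<close> by blast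
    thus ?thesis using card_image by (auto simp: embeds_def)
  qed
  have "n \<le> sum card P" using card_Union_le_sum_card[of P] PU by simp
  also have "sum card P = card P * card VF" using cardS by simp
  finally have n1: "n \<le> card P * card VF" .
  define g where "g S = (SOME x. x \<in> S \<inter> {m..<n})" for S
  have gS: "g S \<in> S \<inter> {m..<n}" if SP: "S \<in> P" for S
  proof -
    obtain z where "z \<in> S \<inter> {m..<n}" using meet[OF SP] by blast
    thus ?thesis unfolding g_def by (rule someI)
  qed
  have "inj_on g P"
  proof (rule inj_onI)
    fix S T assume ST: "S \<in> P" "T \<in> P" "g S = g T"
    have "g S \<in> S \<inter> T" using gS[OF ST(1)] gS[OF ST(2)] ST(3) by simp
    thus "S = T" using Pd ST(1,2) by blast
  qed
  moreover have "g ` P \<subseteq> {m..<n}"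
  proof (rule image_subsetI)
    fix S assume "S \<in> P" thus "g S \<in> {m..<n}" using gS by simp
  qed
  ultimately have "card P \<le> card {m..<n}" by (rule card_inj_on_le) simp
  hence "card P \<le> n - m" by simp
  hence "card P * card VF \<le> card VF * (n - m)" by (simp add: mult.commute)
  with n1 small show False by linarith
qed


lemma codeg:
  assumes Edef: "E = E0 \<union> {e. e \<subseteq> {0..<n} \<and> card e = 3 \<and> (\<exists>x\<in>e. m \<le> x)}"
    and x: "x \<in> {0..<n}" and y: "y \<in> {0..<n}" and xy: "x \<noteq> y" and finE: "finite E"
  shows "real (n - m) - 2 \<le> real (card {e\<in>E. x \<in> e \<and> y \<in> e})"
proof -
  let ?B = "{m..<n} - {x, y}"
  have "inj_on (\<lambda>b. {x, y, b}) ?B"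
  proof (rule inj_onI)
    fix b b' assume b: "b \<in> ?B" and b': "b' \<in> ?B" and eq: "{x, y, b} = {x, y, b'}"
    have "b \<in> {x, y, b'}" using eq by blast
    thus "b = b'" using b by auto
  qed
  moreover have "(\<lambda>b. {x, y, b}) ` ?B \<subseteq> {e\<in>E. x \<in> e \<and> y \<in> e}"
  proof
    fix e assume "e \<in> (\<lambda>b. {x, y, b}) ` ?B"
    then obtain b where b: "b \<in> ?B" and e: "e = {x, y, b}" by blast
    have "card e = 3" using b xy e by simp
    moreover have "e \<subseteq> {0..<n}" using x y b e by auto
    moreover have "\<exists>z\<in>e. m \<le> z" using b e by auto
    ultimately have "e \<in> E" using Edef by blast
    thus "e \<in> {e\<in>E. x \<in> e \<and> y \<in> e}" using e by blast
  qed
  moreover have "finite {e\<in>E. x \<in> e \<and> y \<in> e}"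
  proof (rule finite_subset)
    show "{e\<in>E. x \<in> e \<and> y \<in> e} \<subseteq> E" by auto
    show "finite E" by fact
  qed
  ultimately have c1: "card ?B \<le> card {e\<in>E. x \<in> e \<and> y \<in> e}" by (rule card_inj_on_le)
  have "card {m..<n} \<le> card ?B + card {x, y}"
  proof -
    have "card {m..<n} \<le> card (?B \<union> {x, y})" by (rule card_mono) auto
    also have "\<dots> \<le> card ?B + card {x, y}" by (rule card_Un_le)
    finally show ?thesis .
  qed
  moreover have "card {x, y} \<le> 2" by (simp add: card_insert_le_m1)
  ultimately have "n - m \<le> card {e\<in>E. x \<in> e \<and> y \<in> e} + 2" using c1 by simp
  hence "real (n - m) \<le> real (card {e\<in>E. x \<in> e \<and> y \<in> e} + 2)" by (simp only: of_nat_le_iff)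
  thus ?thesis by simp
qed


lemma nondistinct_card:
  fixes V :: "'a set"
  assumes fin: "finite V" and s: "X1 \<subseteq> V" "X2 \<subseteq> V" "X3 \<subseteq> V"
  shows "card {(x1, x2, x3). x1 \<in> X1 \<and> x2 \<in> X2 \<and> x3 \<in> X3 \<and> \<not> (x1 \<noteq> x2 \<and> x1 \<noteq> x3 \<and> x2 \<noteq> x3)}
          \<le> 3 * card V ^ 2"
proof -
  let ?f1 = "\<lambda>(a::'a, c::'a). (a, a, c)"
  let ?f2 = "\<lambda>(a::'a, b::'a). (a, b, a)"
  let ?f3 = "\<lambda>(a::'a, b::'a). (a, b, b)"
  let ?D = "{(x1, x2, x3). x1 \<in> X1 \<and> x2 \<in> X2 \<and> x3 \<in> X3 \<and> \<not> (x1 \<noteq> x2 \<and> x1 \<noteq> x3 \<and> x2 \<noteq> x3)}"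
  have sub: "?D \<subseteq> ?f1 ` (V \<times> V) \<union> ?f2 ` (V \<times> V) \<union> ?f3 ` (V \<times> V)"
  proof
    fix t assume "t \<in> ?D"
    then obtain x1 x2 x3 where t: "t = (x1, x2, x3)" and m: "x1 \<in> V" "x2 \<in> V" "x3 \<in> V"
      and nd: "x1 = x2 \<or> x1 = x3 \<or> x2 = x3" using s by blast
    show "t \<in> ?f1 ` (V \<times> V) \<union> ?f2 ` (V \<times> V) \<union> ?f3 ` (V \<times> V)"
    proof -
      { assume "x1 = x2" hence "t \<in> ?f1 ` (V \<times> V)" using t m by (auto intro!: image_eqI[of _ _ "(x1, x3)"]) }
      moreover
      { assume "x1 = x3" hence "t \<in> ?f2 ` (V \<times> V)" using t m by (auto intro!: image_eqI[of _ _ "(x1, x2)"]) }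
      moreover
      { assume "x2 = x3" hence "t \<in> ?f3 ` (V \<times> V)" using t m by (auto intro!: image_eqI[of _ _ "(x1, x2)"]) }
      ultimately show ?thesis using nd by blast
    qed
  qed
  have fVV: "finite (V \<times> V)" using fin by simp
  have c: "card (f ` (V \<times> V)) \<le> card V ^ 2" for f :: "'a \<times> 'a \<Rightarrow> 'a \<times> 'a \<times> 'a"
  proof -
    have "card (f ` (V \<times> V)) \<le> card (V \<times> V)" by (rule card_image_le[OF fVV])
    also have "card (V \<times> V) = card V * card V" by (rule card_cartesian_product)
    also have "\<dots> = card V ^ 2" by (simp only: power2_eq_square)
    finally show ?thesis .
  qed
  have "card ?D \<le> card (?f1 ` (V \<times> V) \<union> ?f2 ` (V \<times> V) \<union> ?f3 ` (V \<times> V))"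
    by (rule card_mono) (simp add: fVV, rule sub)
  also have "\<dots> \<le> card (?f1 ` (V \<times> V) \<union> ?f2 ` (V \<times> V)) + card (?f3 ` (V \<times> V))" by (rule card_Un_le)
  also have "\<dots> \<le> card (?f1 ` (V \<times> V)) + card (?f2 ` (V \<times> V)) + card (?f3 ` (V \<times> V))"
    using card_Un_le[of "?f1 ` (V \<times> V)" "?f2 ` (V \<times> V)"] by linarith
  also have "\<dots> \<le> 3 * card V ^ 2" using c[of ?f1] c[of ?f2] c[of ?f3] by linarith
  finally show ?thesis .
qed

lemma density:
  fixes E0 E :: "nat set set"
  assumes E0s: "\<forall>e\<in>E0. e \<subseteq> {0..<m}"
    and dd: "dense_dot {0..<m} E0 p \<mu>'"
    and p1: "p \<le> 1" and mn: "m \<le> n"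
    and Edef: "E = E0 \<union> {e. e \<subseteq> {0..<n} \<and> card e = 3 \<and> (\<exists>x\<in>e. m \<le> x)}"
    and X: "X1 \<subseteq> {0..<n}" "X2 \<subseteq> {0..<n}" "X3 \<subseteq> {0..<n}"
  shows "real (card {(x1, x2, x3). x1 \<in> X1 \<and> x2 \<in> X2 \<and> x3 \<in> X3 \<and> {x1, x2, x3} \<in> E})
     \<ge> p * (real (card X1) * real (card X2) * real (card X3)) - \<mu>' * real m ^ 3 - 3 * real n ^ 2"
proof -
  define Y1 where "Y1 = X1 \<inter> {0..<m}"
  define Y2 where "Y2 = X2 \<inter> {0..<m}"
  define Y3 where "Y3 = X3 \<inter> {0..<m}"
  define SE where "SE = {(x1, x2, x3). x1 \<in> X1 \<and> x2 \<in> X2 \<and> x3 \<in> X3 \<and> {x1, x2, x3} \<in> E}"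
  define S0 where "S0 = {(x1, x2, x3). x1 \<in> Y1 \<and> x2 \<in> Y2 \<and> x3 \<in> Y3 \<and> {x1, x2, x3} \<in> E0}"
  define T where "T = {(x1, x2, x3). x1 \<in> X1 \<and> x2 \<in> X2 \<and> x3 \<in> X3 \<and> (x1 \<noteq> x2 \<and> x1 \<noteq> x3 \<and> x2 \<noteq> x3)
      \<and> (m \<le> x1 \<or> m \<le> x2 \<or> m \<le> x3)}"
  define D where "D = {(x1, x2, x3). x1 \<in> X1 \<and> x2 \<in> X2 \<and> x3 \<in> X3 \<and> \<not> (x1 \<noteq> x2 \<and> x1 \<noteq> x3 \<and> x2 \<noteq> x3)}"
  have YX: "Y1 \<subseteq> X1" "Y2 \<subseteq> X2" "Y3 \<subseteq> X3" by (auto simp: Y1_def Y2_def Y3_def)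
  have Ym: "Y1 \<subseteq> {0..<m}" "Y2 \<subseteq> {0..<m}" "Y3 \<subseteq> {0..<m}" by (auto simp: Y1_def Y2_def Y3_def)
  have finX: "finite X1" "finite X2" "finite X3" using X finite_subset by blast+
  have finP: "finite (X1 \<times> X2 \<times> X3)" using finX by simp
  have SEsub: "SE \<subseteq> X1 \<times> X2 \<times> X3" unfolding SE_def by auto
  have finSE: "finite SE" using finite_subset[OF SEsub finP] .
  have S0SE: "S0 \<subseteq> SE" unfolding S0_def SE_def Edef using YX by auto
  have TSE: "T \<subseteq> SE"
  proof
    fix t assume "t \<in> T"
    then obtain x1 x2 x3 where t: "t = (x1, x2, x3)" and xs: "x1 \<in> X1" "x2 \<in> X2" "x3 \<in> X3"
      and dist: "x1 \<noteq> x2" "x1 \<noteq> x3" "x2 \<noteq> x3" and big: "m \<le> x1 \<or> m \<le> x2 \<or> m \<le> x3"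
      unfolding T_def by blast
    have "card {x1, x2, x3} = 3" using dist by simp
    moreover have "{x1, x2, x3} \<subseteq> {0..<n}" using xs X by blast
    moreover have "\<exists>x\<in>{x1, x2, x3}. m \<le> x" using big by blast
    ultimately have "{x1, x2, x3} \<in> E" unfolding Edef by blast
    thus "t \<in> SE" unfolding SE_def using t xs by simp
  qed
  have disj: "S0 \<inter> T = {}"
  proof (rule ccontr)
    assume "S0 \<inter> T \<noteq> {}"
    then obtain x1 x2 x3 where a: "(x1, x2, x3) \<in> S0" and b: "(x1, x2, x3) \<in> T" by auto
    from a have "x1 < m" "x2 < m" "x3 < m" unfolding S0_def using Ym by auto
    with b show False unfolding T_def by simp
  qed
  have finS0: "finite S0" "finite T" using finite_subset[OF S0SE finSE] finite_subset[OF TSE finSE] by auto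
  have c1: "card S0 + card T \<le> card SE"
  proof -
    have "card S0 + card T = card (S0 \<union> T)" using card_Un_disjoint[OF finS0 disj] by simp
    also have "\<dots> \<le> card SE" by (rule card_mono[OF finSE]) (use S0SE TSE in blast)
    finally show ?thesis .
  qed
  have cover: "X1 \<times> X2 \<times> X3 \<subseteq> (Y1 \<times> Y2 \<times> Y3 \<union> T) \<union> D"
  proof
    fix t assume "t \<in> X1 \<times> X2 \<times> X3"
    then obtain x1 x2 x3 where t: "t = (x1, x2, x3)" and xs: "x1 \<in> X1" "x2 \<in> X2" "x3 \<in> X3" by auto
    show "t \<in> (Y1 \<times> Y2 \<times> Y3 \<union> T) \<union> D"
    proof (cases "x1 < m \<and> x2 < m \<and> x3 < m")
      case True thus ?thesis using t xs X by (simp add: Y1_def Y2_def Y3_def)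
    next
      case False thus ?thesis using t xs by (auto simp: T_def D_def)
    qed
  qed
  have "Y1 \<times> Y2 \<times> Y3 \<subseteq> X1 \<times> X2 \<times> X3" using YX by auto
  hence finY: "finite (Y1 \<times> Y2 \<times> Y3)" using finite_subset finP by blast
  have finD: "finite D" unfolding D_def by (rule finite_subset[OF _ finP]) auto
  have c2: "card X1 * card X2 * card X3 \<le> card Y1 * card Y2 * card Y3 + card T + card D"
  proof -
    have "card X1 * card X2 * card X3 = card (X1 \<times> X2 \<times> X3)" by (simp add: card_cartesian_product)
    also have "\<dots> \<le> card ((Y1 \<times> Y2 \<times> Y3 \<union> T) \<union> D)" by (rule card_mono) (use finY finS0 finD cover in auto)
    also have "\<dots> \<le> card (Y1 \<times> Y2 \<times> Y3 \<union> T) + card D" by (rule card_Un_le)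
    also have "\<dots> \<le> card (Y1 \<times> Y2 \<times> Y3) + card T + card D" using card_Un_le[of "Y1 \<times> Y2 \<times> Y3" T] by linarith
    also have "card (Y1 \<times> Y2 \<times> Y3) = card Y1 * card Y2 * card Y3" by (simp add: card_cartesian_product)
    finally show ?thesis .
  qed
  have c3: "card D \<le> 3 * n ^ 2"
  proof -
    have "card D \<le> 3 * card {0..<n} ^ 2" unfolding D_def
      by (rule nondistinct_card) (use X in auto)
    thus ?thesis by (simp only: card_atLeastLessThan diff_zero)
  qed
  have c4: "real (card S0) \<ge> p * real (card Y1) * real (card Y2) * real (card Y3) - \<mu>' * real m ^ 3"
    using dd[unfolded dense_dot_def, rule_format, OF Ym] unfolding S0_def
    by (simp only: card_atLeastLessThan diff_zero)
  have c5: "card Y1 * card Y2 * card Y3 \<le> card X1 * card X2 * card X3"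
    using card_mono[OF finX(1) YX(1)] card_mono[OF finX(2) YX(2)] card_mono[OF finX(3) YX(3)]
    by (simp add: mult_le_mono)
  define PX where "PX = real (card X1) * real (card X2) * real (card X3)"
  define PY where "PY = real (card Y1) * real (card Y2) * real (card Y3)"
  have r1: "real (card S0) + real (card T) \<le> real (card SE)" using c1 by linarith
  have r2: "PX \<le> PY + real (card T) + real (card D)"
  proof -
    have "real (card X1 * card X2 * card X3) \<le> real (card Y1 * card Y2 * card Y3 + card T + card D)"
      using c2 by (simp only: of_nat_le_iff)
    thus ?thesis unfolding PX_def PY_def by simp
  qed
  have r3: "real (card D) \<le> 3 * real n ^ 2"
  proof -
    have "real (card D) \<le> real (3 * n ^ 2)" using c3 by (simp only: of_nat_le_iff)
    thus ?thesis by simp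
  qed
  have r5: "PY \<le> PX"
  proof -
    have "real (card Y1 * card Y2 * card Y3) \<le> real (card X1 * card X2 * card X3)"
      using c5 by (simp only: of_nat_le_iff)
    thus ?thesis unfolding PX_def PY_def by simp
  qed
  have r4: "real (card S0) \<ge> p * PY - \<mu>' * real m ^ 3" using c4 unfolding PY_def by (simp add: mult.assoc)
  have r6: "0 \<le> (1 - p) * (PX - PY)" using p1 r5 by simp
  have "real (card SE) \<ge> p * PX - \<mu>' * real m ^ 3 - 3 * real n ^ 2"
    using r1 r2 r3 r4 r6 by (simp add: algebra_simps)
  thus ?thesis unfolding SE_def PX_def .
qed



lemma arith_facts:
  fixes v m :: nat
  assumes v1: "1 \<le> v" and mbig: "8 * v * v + 4 * v \<le> m"
  defines "n \<equiv> v * (m div v + m div (2 * v * v))"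
  shows "m < n" "v * (n - m) < n" "real n / (8 * real v) \<le> real (n - m) - 2"
proof -
  define q where "q = m div v"
  define r where "r = m div (2 * v * v)"
  have n: "n = v * q + v * r" unfolding n_def q_def r_def by (simp add: algebra_simps)
  have q1: "v * q \<le> m" "m < v * q + v"
  proof -
    have e: "v * q + m mod v = m" unfolding q_def by (metis mult.commute div_mult_mod_eq)
    have "m mod v < v" using v1 by simp
    thus "v * q \<le> m" "m < v * q + v" using e by linarith+
  qed
  have r1: "2 * v * v * r \<le> m" "m < 2 * v * v * r + 2 * v * v"
  proof -
    have e: "2 * v * v * r + m mod (2 * v * v) = m" unfolding r_def by (metis mult.commute div_mult_mod_eq)
    have "m mod (2 * v * v) < 2 * v * v" using v1 by simp
    thus "2 * v * v * r \<le> m" "m < 2 * v * v * r + 2 * v * v" using e by linarith+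
  qed
  have rpos: "1 \<le> r"
  proof (rule ccontr)
    assume "\<not> 1 \<le> r" hence "r = 0" by simp
    with r1 have "m < 2 * v * v" by simp
    with mbig show False by linarith
  qed
  have vr: "v \<le> v * r" using rpos by simp
  show mn: "m < n" using n q1 vr by linarith
  define rv where "rv = real v"
  define R where "R = real r"
  define A where "A = real (v * q)"
  define M where "M = real m"
  define N where "N = real n"
  have rv1: "1 \<le> rv" using v1 unfolding rv_def by simp
  have N: "N = A + rv * R" unfolding N_def A_def rv_def R_def n by simp
  have F1: "A \<le> M" "M + 1 \<le> A + rv" using q1 unfolding A_def M_def rv_def by linarith+
  have F3: "2 * (rv * (rv * R)) \<le> M" "M + 1 \<le> 2 * (rv * (rv * R)) + 2 * (rv * rv)"
  proof -
    have "real (2 * v * v * r) \<le> real m" "real m + 1 \<le> real (2 * v * v * r + 2 * v * v)"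
      using r1 by (simp only: of_nat_le_iff, linarith)+
    thus "2 * (rv * (rv * R)) \<le> M" "M + 1 \<le> 2 * (rv * (rv * R)) + 2 * (rv * rv)"
      unfolding rv_def R_def M_def by (simp_all add: algebra_simps)
  qed
  have F5: "8 * (rv * rv) + 4 * rv \<le> M"
  proof -
    have "real (8 * v * v + 4 * v) \<le> real m" using mbig by (simp only: of_nat_le_iff)
    thus ?thesis unfolding rv_def M_def by (simp add: algebra_simps)
  qed
  have R1: "1 \<le> R" using rpos unfolding R_def by simp
  have S1: "rv * R \<le> rv * (rv * R)"
    using mult_right_mono[OF rv1, of "rv * R"] rv1 R1 by (simp add: algebra_simps)
  have S0: "0 \<le> rv * R" using rv1 R1 by simp
  have NM: "real (n - m) = N - M" using mn unfolding N_def M_def by simp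
  have B1: "rv * R - rv + 1 \<le> N - M" using N F1 by linarith
  have B2: "N - M \<le> rv * R" using N F1 by linarith
  have "rv * (N - M) \<le> rv * (rv * R)" using mult_left_mono[OF B2] rv1 by simp
  hence "rv * (N - M) < N" using F3 F5 N F1 S0 rv1 by linarith
  hence "real (v * (n - m)) < real n" using NM unfolding rv_def N_def by simp
  thus "v * (n - m) < n" by (simp only: of_nat_less_iff)
  have "8 * rv * (rv * R - rv + 1) \<le> 8 * rv * (N - M)" using mult_left_mono[OF B1] rv1 by simp
  hence G: "8 * (rv * (rv * R)) - 8 * (rv * rv) + 8 * rv \<le> 8 * rv * (N - M)" by (simp add: algebra_simps)
  have "N + 16 * rv \<le> 8 * rv * (N - M)" using G F3 F5 N F1 S1 S0 by linarith
  hence "N \<le> 8 * rv * (N - M - 2)" by (simp add: algebra_simps)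
  hence "N / (8 * rv) \<le> N - M - 2" using rv1 by (simp add: divide_simps mult.commute)
  thus "real n / (8 * real v) \<le> real (n - m) - 2" using NM unfolding N_def rv_def by simp
qed



lemma key:
  fixes VF :: "'b set" and EF :: "'b set set"
  assumes tg: "three_graph VF EF" and fac: "FACTOR_dot_2 VF EF"
    and pS: "p \<in> pi_dot_set VF EF"
  shows "p = 0"
proof (rule ccontr)
  assume pn0: "p \<noteq> 0"
  have p01: "0 \<le> p" "p \<le> 1" and
    pr: "\<And>\<mu>. \<mu> > 0 \<Longrightarrow> \<forall>n0::nat. \<exists>n::nat. \<exists>E::nat set set. n \<ge> n0 \<and>
        three_graph {0..<n} E \<and> dense_dot {0..<n} E p \<mu> \<and> F_free VF EF {0..<n} E"
    using pS unfolding pi_dot_set_def by auto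
  have pp: "0 < p" using p01 pn0 by simp
  have finVF: "finite VF" and EFs: "\<forall>e\<in>EF. e \<subseteq> VF" "\<forall>e\<in>EF. card e = 3"
    using tg unfolding three_graph_def by auto
  show False
  proof (cases "VF = {}")
    case True
    have "\<exists>n. \<exists>E::nat set set. F_free VF EF {0..<n} E" using pr[of 1] by (metis zero_less_one)
    then obtain n and E :: "nat set set" where "F_free VF EF {0..<n} E" by blast
    moreover have "EF = {}" using EFs True by fastforce
    ultimately show False using True by (auto simp: F_free_def embeds_def)
  next
    case False
    define v where "v = card VF"
    have v1: "1 \<le> v" using False finVF unfolding v_def by (simp add: Suc_le_eq card_gt_0_iff)
    define \<alpha> where "\<alpha> = 1 / (8 * real v)"
    have a01: "0 < \<alpha>" "\<alpha> < 1" using v1 unfolding \<alpha>_def by (auto simp: divide_simps)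
    have p'01: "0 < p / 2" "p / 2 < 1" using pp p01 by auto
    obtain n0 \<mu> where \<mu>0: "\<mu> > 0" and F: "\<And>n E. three_graph {0..<n} E \<Longrightarrow> dense_dot {0..<n} E (p/2) \<mu> \<Longrightarrow>
              min_codeg_ge {0..<n} E (\<alpha> * real n) \<Longrightarrow> n \<ge> n0 \<Longrightarrow>
              card VF dvd n \<Longrightarrow> has_F_factor VF EF {0..<n} E"
      using fac a01 p'01 unfolding FACTOR_dot_2_def by meson
    define K where "K = n0 + 8 * v * v + 4 * v + nat \<lceil>6 / \<mu>\<rceil>"
    obtain m E0 where mK: "m \<ge> K" and tg0: "three_graph {0..<m} E0" and dd0: "dense_dot {0..<m} E0 p (\<mu>/2)"
      and free: "F_free VF EF {0..<m} E0"
    proof -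
      have "\<mu>/2 > 0" using \<mu>0 by simp
      from pr[OF this, rule_format, of K] show ?thesis using that by blast
    qed
    have mbig: "8 * v * v + 4 * v \<le> m" using mK unfolding K_def by simp
    define n where "n = v * (m div v + m div (2 * v * v))"
    have mn: "m < n" and small: "v * (n - m) < n" and cod: "real n / (8 * real v) \<le> real (n - m) - 2"
      using arith_facts[OF v1 mbig] unfolding n_def by auto
    have nn0: "n0 \<le> n" using mK mn unfolding K_def by simp
    have "6 / \<mu> \<le> real (nat \<lceil>6 / \<mu>\<rceil>)" by linarith
    also have "\<dots> \<le> real n"
    proof -
      have "nat \<lceil>6 / \<mu>\<rceil> \<le> n" using mK mn unfolding K_def by linarith
      thus ?thesis by (simp only: of_nat_le_iff)
    qed
    finally have "6 \<le> \<mu> * real n" using \<mu>0 by (simp add: divide_simps mult.commute)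
    define E where "E = E0 \<union> {e. e \<subseteq> {0..<n} \<and> card e = 3 \<and> (\<exists>x\<in>e. m \<le> x)}"
    have E0s: "\<forall>e\<in>E0. e \<subseteq> {0..<m}" "\<forall>e\<in>E0. card e = 3" using tg0 unfolding three_graph_def by auto
    have tgE: "three_graph {0..<n} E"
      unfolding three_graph_def E_def using E0s mn by fastforce
    have finE: "finite E"
    proof (rule finite_subset)
      show "E \<subseteq> Pow {0..<n}" using tgE unfolding three_graph_def by auto
    qed simp
    have ddE: "dense_dot {0..<n} E (p/2) \<mu>"
      unfolding dense_dot_def
    proof (intro allI impI)
      fix X1 X2 X3 assume X: "X1 \<subseteq> {0..<n}" "X2 \<subseteq> {0..<n}" "X3 \<subseteq> {0..<n}"
      define PX where "PX = real (card X1) * real (card X2) * real (card X3)"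
      have d: "real (card {(x1, x2, x3). x1 \<in> X1 \<and> x2 \<in> X2 \<and> x3 \<in> X3 \<and> {x1, x2, x3} \<in> E})
         \<ge> p * PX - \<mu>/2 * real m ^ 3 - 3 * real n ^ 2"
        unfolding PX_def by (rule density[OF E0s(1) dd0 p01(2) less_imp_le[OF mn] E_def X])
      have PX0: "0 \<le> PX" unfolding PX_def by simp
      have "p / 2 * PX \<le> p * PX" using PX0 pp by simp
      moreover have "real m ^ 3 \<le> real n ^ 3" using mn by (simp add: power_mono)
      moreover have "3 * real n ^ 2 \<le> \<mu> / 2 * real n ^ 3"
      proof -
        have "3 * real n ^ 2 = real n ^ 2 * 3" by simp
        also have "\<dots> \<le> real n ^ 2 * (\<mu> * real n / 2)" using \<open>6 \<le> \<mu> * real n\<close> by (intro mult_left_mono) auto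
        also have "\<dots> = \<mu> / 2 * real n ^ 3" by (simp add: power3_eq_cube power2_eq_square)
        finally show ?thesis .
      qed
      ultimately have ineq: "p * PX - \<mu>/2 * real m ^ 3 - 3 * real n ^ 2 \<ge> p / 2 * PX - \<mu> * real n ^ 3"
      proof -
        have "\<mu> / 2 * real m ^ 3 \<le> \<mu> / 2 * real n ^ 3"
          using \<open>real m ^ 3 \<le> real n ^ 3\<close> \<mu>0 by (intro mult_left_mono) auto
        with \<open>p / 2 * PX \<le> p * PX\<close> \<open>3 * real n ^ 2 \<le> \<mu> / 2 * real n ^ 3\<close> show ?thesis by linarith
      qed
      thus "p / 2 * real (card X1) * real (card X2) * real (card X3) - \<mu> * real (card {0..<n}) ^ 3
          \<le> real (card {(x1, x2, x3). x1 \<in> X1 \<and> x2 \<in> X2 \<and> x3 \<in> X3 \<and> {x1, x2, x3} \<in> E})"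
        using d unfolding PX_def by (simp add: mult.assoc)
    qed
    have codE: "min_codeg_ge {0..<n} E (\<alpha> * real n)"
      unfolding min_codeg_ge_def
    proof (intro ballI impI)
      fix x y assume "x \<in> {0..<n}" "y \<in> {0..<n}" "x \<noteq> y"
      from codeg[OF E_def this finE] cod show "\<alpha> * real n \<le> real (card {e\<in>E. x \<in> e \<and> y \<in> e})"
        unfolding \<alpha>_def by simp
    qed
    have "card VF dvd n" unfolding n_def v_def by simp
    from F[OF tgE ddE codE nn0 this] have "has_F_factor VF EF {0..<n} E" .
    moreover have "\<not> has_F_factor VF EF {0..<n} E"
      by (rule no_factor[OF finVF False EFs(1) free E0s(1) E_def]) (use small in \<open>simp add: v_def\<close>)
    ultimately show False by contradiction
  qed
qed

theorem mainTheorem14: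
  fixes VF :: "'b set" and EF :: "'b set set"
  assumes "three_graph VF EF"
    and "FACTOR_dot_2 VF EF"
  shows "pi_dot VF EF = 0"
proof -
  have e: "insert 0 (pi_dot_set VF EF) = {0}" using key[OF assms] by blast
  show ?thesis unfolding pi_dot_def e by (rule cSup_singleton)
qed


end
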